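(* Let $Z=(\varphi^2-z_x\varphi-z_y)\,\varphi_\lambda^2$, where $\varphi_\lambda=d\varphi/d\lambda$. Then $Z$ is a formal Laurent series of the form $Z=\sum_{n\ge-4}Z^{(n)}\lambda^{n-2}$, with coefficients $Z^{(n)}$ functions on the covering $\bar\tau_*$, and each $Z^{(n)}$ is a shadow of a symmetry of the Gibbons–Tsarev equation in $\bar\tau_*$, i.e. $$\tilde D_y^2(Z^{(n)})+z_x\tilde D_x\tilde D_y(Z^{(n)})-z_y\tilde D_x^2(Z^{(n)})+z_{xy}\tilde D_x(Z^{(n)})-z_{xx}\tilde D_y(Z^{(n)})=0 .$$
   Context: The Gibbons–Tsarev equation $\mathcal E$ is $z_{yy}+z_xz_{xy}-z_yz_{xx}+1=0$ with internal coordinates $x,y,z_X$ ($z_X=\partial^{a+b}z/\partial x^a\partial y^b$, $X=x^ay^b$, $b\in\{0,1\}$) and total derivatives $D_x,D_y$. Put $\varphi^{(1)}=-y$, $\varphi^{(2)}=-x$, $\varphi^{(3)}=-z-\tfrac12y^2$, let $\varphi^{(k)}$, $k\ge4$, be new coordinates, and $\varphi(\lambda)=1/\lambda+\sum_{k\ge1}\varphi^{(k)}\lambda^k$. The covering $\bar\tau_*$ has coordinates $x,y,z_X,\varphi^{(k)}$ ($k\ge4$) and commuting total derivatives $\tilde D_x=D_x+\sum_{k\ge4}\varphi^{(k)}_x\partial/\partial\varphi^{(k)}$, $\tilde D_y=D_y+\sum_{k\ge4}\varphi^{(k)}_y\partial/\partial\varphi^{(k)}$, where the functions $\varphi^{(k)}_x,\varphi^{(k)}_y$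 (polynomials in $x,y,z,z_x,z_y,\varphi^{(4)},\dots,\varphi^{(k-1)}$) are uniquely determined by requiring that, with $\varphi_x=\sum_{k\ge1}\tilde D_x(\varphi^{(k)})\lambda^k$, $\varphi_y=\sum_{k\ge1}\tilde D_y(\varphi^{(k)})\lambda^k$, one has $(\varphi^2-z_x\varphi-z_y)\varphi_x=-1$ and $(\varphi^2-z_x\varphi-z_y)\varphi_y=-(\varphi-z_x)$ coefficientwise in $\lambda$. *)

theory Defs
  imports Complex_Main "HOL-Library.Poly_Mapping" "HOL-Computational_Algebra.Formal_Laurent_Series"
begin

text \<open>Zv a b stands for z_X with X = x^a y^b,
  where b = True means b = 1 and b = False means b = 0.  Phi k stands for the
  nonlocal coordinate phi^(k); only k \<ge> 4 are coordinates of the covering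
  (the variables Phi 0 .. Phi 3 are never used).\<close>
datatype var = Xv | Yv | Zv nat bool | Phi nat

text \<open>Functions on the covering: (real) polynomials in finitely many coordinates.\<close>
type_synonym jpoly = "(var \<Rightarrow>\<^sub>0 nat) \<Rightarrow>\<^sub>0 real"

definition cvar :: "var \<Rightarrow> jpoly" where
  "cvar v = Poly_Mapping.single (Poly_Mapping.single v 1) 1"

definition pconst :: "real \<Rightarrow> jpoly" where
  "pconst c = Poly_Mapping.single 0 c"

definition pvars :: "jpoly \<Rightarrow> var set" where
  "pvars p = (\<Union>m \<in> Poly_Mapping.keys p. Poly_Mapping.keys m)"

definition pderivv :: "var \<Rightarrow> jpoly \<Rightarrow> jpoly" where
  "pderivv v p = Abs_poly_mapping (\<lambda>m.
      of_nat (Poly_Mapping.lookup m v + 1) * Poly_Mapping.lookup p (m + Poly_Mapping.single v 1))"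

definition derivation :: "(var \<Rightarrow> jpoly) \<Rightarrow> jpoly \<Rightarrow> jpoly" where
  "derivation g p = (\<Sum>v \<in> pvars p. g v * pderivv v p)"

text \<open>Total derivative D_x on the equation (without nonlocal part), on internal
  coordinates x, y, z_X.\<close>
definition genDx :: "var \<Rightarrow> jpoly" where
  "genDx v = (case v of Xv \<Rightarrow> 1 | Yv \<Rightarrow> 0 | Zv a b \<Rightarrow> cvar (Zv (Suc a) b) | Phi k \<Rightarrow> 0)"

text \<open>z_yy expressed from the Gibbons-Tsarev equation
  z_yy + z_x z_xy - z_y z_xx + 1 = 0.\<close>
definition zyy :: jpoly where
  "zyy = cvar (Zv 0 True) * cvar (Zv 2 False) - cvar (Zv 1 False) * cvar (Zv 1 True) - 1"

text \<open>Lifted total derivatives on the covering, given the functions phi^(k)_x, phi^(k)_y.\<close>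
definition tDx :: "(nat \<Rightarrow> jpoly) \<Rightarrow> jpoly \<Rightarrow> jpoly" where
  "tDx phx = derivation (\<lambda>v. case v of Xv \<Rightarrow> 1 | Yv \<Rightarrow> 0
       | Zv a b \<Rightarrow> cvar (Zv (Suc a) b)
       | Phi k \<Rightarrow> (if 4 \<le> k then phx k else 0))"

definition tDy :: "(nat \<Rightarrow> jpoly) \<Rightarrow> jpoly \<Rightarrow> jpoly" where
  "tDy phy = derivation (\<lambda>v. case v of Xv \<Rightarrow> 0 | Yv \<Rightarrow> 1
       | Zv a b \<Rightarrow> (if b then (derivation genDx ^^ a) zyy else cvar (Zv a True))
       | Phi k \<Rightarrow> (if 4 \<le> k then phy k else 0))"

definition phic :: "nat \<Rightarrow> jpoly" where
  "phic k = (if k = 1 then - cvar Yv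
             else if k = 2 then - cvar Xv
             else if k = 3 then - cvar (Zv 0 False) - pconst (1/2) * cvar Yv ^ 2
             else cvar (Phi k))"

definition phiL :: "jpoly fls" where
  "phiL = fls_X_inv + fps_to_fls (Abs_fps (\<lambda>k. if k = 0 then 0 else phic k))"

definition phiD :: "(jpoly \<Rightarrow> jpoly) \<Rightarrow> jpoly fls" where
  "phiD D = fps_to_fls (Abs_fps (\<lambda>k. if k = 0 then 0 else D (phic k)))"

definition zx :: jpoly where "zx = cvar (Zv 1 False)"
definition zy :: jpoly where "zy = cvar (Zv 0 True)"
definition zxx :: jpoly where "zxx = cvar (Zv 2 False)"
definition zxy :: jpoly where "zxy = cvar (Zv 1 True)"

definition Pfac :: "jpoly fls" where
  "Pfac = phiL ^ 2 - fls_const zx * phiL - fls_const zy"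

definition covering_data :: "(nat \<Rightarrow> jpoly) \<Rightarrow> (nat \<Rightarrow> jpoly) \<Rightarrow> bool" where
  "covering_data phx phy \<longleftrightarrow>
     (\<forall>k\<ge>4. pvars (phx k) \<union> pvars (phy k) \<subseteq>
               {Xv, Yv, Zv 0 False, Zv 1 False, Zv 0 True} \<union> Phi ` {4..<k})
   \<and> Pfac * phiD (tDx phx) = - 1
   \<and> Pfac * phiD (tDy phy) = - (phiL - fls_const zx)"

definition Zser :: "jpoly fls" where
  "Zser = Pfac * (fls_deriv phiL) ^ 2"

end

theory Submission imports Defs begin
unbundle fps_syntax

lemma pd_fin: "finite {m. (of_nat (Poly_Mapping.lookup m v + 1) :: real) * Poly_Mapping.lookup (p::jpoly) (m + Poly_Mapping.single v 1) \<noteq> 0}"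
proof -
  have "{m. (of_nat (Poly_Mapping.lookup m v + 1) :: real) * Poly_Mapping.lookup p (m + Poly_Mapping.single v 1) \<noteq> 0}
        \<subseteq> (\<lambda>m. m + Poly_Mapping.single v 1) -` Poly_Mapping.keys p"
    by (auto simp: in_keys_iff)
  moreover have "finite ((\<lambda>m. m + Poly_Mapping.single v 1) -` Poly_Mapping.keys p)"
    by (rule finite_vimageI) (auto simp: inj_on_def)
  ultimately show ?thesis by (rule finite_subset)
qed

lemma lookup_pd: "Poly_Mapping.lookup (pderivv v p) m =
   of_nat (Poly_Mapping.lookup m v + 1) * Poly_Mapping.lookup p (m + Poly_Mapping.single v 1)"
  unfolding pderivv_def using pd_fin[of v p] by simp

lemma pd_add: "pderivv v (p + q) = pderivv v p + pderivv v q"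
  by (rule poly_mapping_eqI) (simp add: lookup_pd lookup_add distrib_left)

lemma pd_zero: "pderivv v 0 = 0"
  by (rule poly_mapping_eqI) (simp add: lookup_pd)

lemma pd_sum: "pderivv v (sum f S) = (\<Sum>s\<in>S. pderivv v (f s))"
  by (induction S rule: infinite_finite_induct) (simp_all add: pd_zero pd_add)

lemma pd_single: "pderivv v (Poly_Mapping.single a c) =
   Poly_Mapping.single (a - Poly_Mapping.single v 1) (of_nat (Poly_Mapping.lookup a v) * c)"
proof (rule poly_mapping_eqI)
  fix m
  show "Poly_Mapping.lookup (pderivv v (Poly_Mapping.single a c)) m =
        Poly_Mapping.lookup (Poly_Mapping.single (a - Poly_Mapping.single v 1) (of_nat (Poly_Mapping.lookup a v) * c)) m"
  proof (cases "a = m + Poly_Mapping.single v 1")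
    case True
    then have "a - Poly_Mapping.single v 1 = m"
      by (simp add: poly_mapping_eqI lookup_minus lookup_add)
    then show ?thesis using True by (simp add: lookup_pd lookup_single lookup_add)
  next
    case False
    have "(of_nat (Poly_Mapping.lookup a v) * c when a - Poly_Mapping.single v 1 = m) = 0"
    proof (cases "Poly_Mapping.lookup a v = 0")
      case False2: False
      have "a - Poly_Mapping.single v 1 \<noteq> m"
      proof
        assume h: "a - Poly_Mapping.single v 1 = m"
        have "a = m + Poly_Mapping.single v 1"
        proof (rule poly_mapping_eqI)
          fix k show "Poly_Mapping.lookup a k = Poly_Mapping.lookup (m + Poly_Mapping.single v 1) k"
            using False2 unfolding h[symmetric]
            by (cases "k = v") (auto simp: lookup_add lookup_minus lookup_single)
        qed
        with False show False by simp
      qed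
      then show ?thesis by simp
    qed simp
    then show ?thesis using False
      by (simp add: lookup_pd lookup_single)
  qed
qed


lemma pd_mult_single: "pderivv v (Poly_Mapping.single a c * Poly_Mapping.single b d) =
   Poly_Mapping.single a c * pderivv v (Poly_Mapping.single b d) + pderivv v (Poly_Mapping.single a c) * Poly_Mapping.single b d"
proof -
  define e where "e = Poly_Mapping.single v (1::nat)"
  have ev: "Poly_Mapping.lookup e k = (if k = v then 1 else 0)" for k
    by (simp add: e_def lookup_single when_def)
  have A: "Poly_Mapping.single (a + b - e) (of_nat (Poly_Mapping.lookup b v) * (c * d))
         = Poly_Mapping.single (a + (b - e)) (c * (of_nat (Poly_Mapping.lookup b v) * d))"
  proof (cases "Poly_Mapping.lookup b v = 0")
    case False
    then have "a + b - e = a + (b - e)"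
      by (intro poly_mapping_eqI) (simp add: lookup_add lookup_minus ev)
    then show ?thesis by (simp add: algebra_simps)
  qed simp
  have B: "Poly_Mapping.single (a + b - e) (of_nat (Poly_Mapping.lookup a v) * (c * d))
         = Poly_Mapping.single (a - e + b) (of_nat (Poly_Mapping.lookup a v) * c * d)"
  proof (cases "Poly_Mapping.lookup a v = 0")
    case False
    then have "a + b - e = a - e + b"
      by (intro poly_mapping_eqI) (simp add: lookup_add lookup_minus ev)
    then show ?thesis by (simp add: algebra_simps)
  qed simp
  have "pderivv v (Poly_Mapping.single a c * Poly_Mapping.single b d) =
     Poly_Mapping.single (a + b - e) (of_nat (Poly_Mapping.lookup a v) * (c * d)) +
     Poly_Mapping.single (a + b - e) (of_nat (Poly_Mapping.lookup b v) * (c * d))"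
    by (simp add: mult_single pd_single e_def lookup_add distrib_right flip: single_add)
  also have "\<dots> = Poly_Mapping.single a c * pderivv v (Poly_Mapping.single b d) + pderivv v (Poly_Mapping.single a c) * Poly_Mapping.single b d"
    unfolding A B by (simp add: mult_single pd_single e_def add.commute)
  finally show ?thesis .
qed

lemma poly_decomp: "(p::jpoly) = (\<Sum>a\<in>Poly_Mapping.keys p. Poly_Mapping.single a (Poly_Mapping.lookup p a))"
proof (rule poly_mapping_eqI)
  fix k
  show "Poly_Mapping.lookup p k = Poly_Mapping.lookup (\<Sum>a\<in>Poly_Mapping.keys p. Poly_Mapping.single a (Poly_Mapping.lookup p a)) k"
    by (simp add: lookup_sum lookup_single when_def in_keys_iff)
qed

lemma pd_mult: "pderivv v ((p::jpoly) * q) = p * pderivv v q + pderivv v p * q"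
proof -
  let ?K = "Poly_Mapping.keys p" and ?L = "Poly_Mapping.keys q"
  define s where "s = (\<lambda>a. Poly_Mapping.single a (Poly_Mapping.lookup p a))"
  define t where "t = (\<lambda>b. Poly_Mapping.single b (Poly_Mapping.lookup q b))"
  have dp: "p = sum s ?K" unfolding s_def by (rule poly_decomp)
  have dq: "q = sum t ?L" unfolding t_def by (rule poly_decomp)
  have ss: "\<And>a. s a = Poly_Mapping.single a (Poly_Mapping.lookup p a)" and tt: "\<And>b. t b = Poly_Mapping.single b (Poly_Mapping.lookup q b)"
    by (simp_all add: s_def t_def)
  have "pderivv v (sum s ?K * sum t ?L) = (\<Sum>a\<in>?K. \<Sum>b\<in>?L. pderivv v (s a * t b))"
    by (simp only: sum_product pd_sum)
  also have "\<dots> = (\<Sum>a\<in>?K. \<Sum>b\<in>?L. s a * pderivv v (t b) + pderivv v (s a) * t b)"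
    by (simp only: ss tt pd_mult_single)
  also have "\<dots> = sum s ?K * pderivv v (sum t ?L) + pderivv v (sum s ?K) * sum t ?L"
    by (simp only: sum.distrib sum_product pd_sum)
  finally show ?thesis using dp dq by metis
qed


lemma finite_pvars: "finite (pvars p)"
  unfolding pvars_def by auto

lemma pd_notin: "v \<notin> pvars p \<Longrightarrow> pderivv v p = 0"
proof (rule poly_mapping_eqI)
  fix m assume v: "v \<notin> pvars p"
  have "Poly_Mapping.lookup p (m + Poly_Mapping.single v 1) = 0"
  proof (rule ccontr)
    assume "Poly_Mapping.lookup p (m + Poly_Mapping.single v 1) \<noteq> 0"
    then have "m + Poly_Mapping.single v 1 \<in> Poly_Mapping.keys p" by (simp add: in_keys_iff)
    moreover have "v \<in> Poly_Mapping.keys (m + Poly_Mapping.single v 1)"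
      by (simp add: in_keys_iff lookup_add)
    ultimately have "v \<in> pvars p" unfolding pvars_def by blast
    with v show False by simp
  qed
  then show "Poly_Mapping.lookup (pderivv v p) m = Poly_Mapping.lookup 0 m"
    by (simp add: lookup_pd)
qed

lemma derivation_superset: "finite S \<Longrightarrow> pvars p \<subseteq> S \<Longrightarrow> derivation g p = (\<Sum>v\<in>S. g v * pderivv v p)"
  unfolding derivation_def
  by (rule sum.mono_neutral_left) (auto simp: pd_notin)

lemma keys_add_nat: "Poly_Mapping.keys ((a::var \<Rightarrow>\<^sub>0 nat) + b) = Poly_Mapping.keys a \<union> Poly_Mapping.keys b"
  by (auto simp: in_keys_iff lookup_add)

lemma pvars_add: "pvars (p + q) \<subseteq> pvars p \<union> pvars q"
  unfolding pvars_def using keys_add[of p q] by blast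

lemma pvars_mult: "pvars (p * q) \<subseteq> pvars p \<union> pvars q"
  unfolding pvars_def using keys_mult[of p q] by (force simp: keys_add_nat)

definition isder :: "('a::comm_ring_1 \<Rightarrow> 'a) \<Rightarrow> bool" where
  "isder D \<longleftrightarrow> (\<forall>x y. D (x + y) = D x + D y) \<and> (\<forall>x y. D (x * y) = x * D y + D x * y)"

lemma isder_derivation: "isder (derivation g)"
  unfolding isder_def
proof (intro conjI allI)
  fix x y :: jpoly
  let ?S = "pvars x \<union> pvars y"
  have f: "finite ?S" by (simp add: finite_pvars)
  show "derivation g (x + y) = derivation g x + derivation g y"
    using derivation_superset[OF f, of "x + y" g] derivation_superset[OF f, of x g] derivation_superset[OF f, of y g]
      pvars_add[of x y]
    by (simp add: pd_add distrib_left sum.distrib)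
  show "derivation g (x * y) = x * derivation g y + derivation g x * y"
    using derivation_superset[OF f, of "x * y" g] derivation_superset[OF f, of x g] derivation_superset[OF f, of y g]
      pvars_mult[of x y]
    by (simp add: pd_mult distrib_left sum.distrib sum_distrib_left sum_distrib_right algebra_simps)
qed

lemma derivation_cvar: "derivation g (cvar v) = g v"
proof -
  have pv: "pvars (cvar v) = {v}"
    by (simp add: pvars_def cvar_def)
  have "pderivv v (cvar v) = 1"
    by (simp add: cvar_def pd_single flip: single_one)
  then show ?thesis by (simp add: derivation_def pv)
qed

lemma isder_add: "isder D \<Longrightarrow> D (x + y) = D x + D y" by (simp add: isder_def)
lemma isder_mult: "isder D \<Longrightarrow> D (x * y) = x * D y + D x * y" by (simp add: isder_def)
lemma isder_0: "isder D \<Longrightarrow> D 0 = 0"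
  using isder_add[of D 0 0] by simp
lemma isder_uminus: "isder D \<Longrightarrow> D (- x) = - D x"
proof -
  assume d: "isder D"
  have "D x + D (- x) = 0" using isder_add[OF d, of x "-x"] isder_0[OF d] by simp
  then show ?thesis by (metis add.commute eq_neg_iff_add_eq_0)
qed
lemma isder_diff: "isder D \<Longrightarrow> D (x - y) = D x - D y"
  using isder_add[of D x "-y"] isder_uminus[of D y] by simp
lemma isder_1: "isder D \<Longrightarrow> D 1 = 0"
  using isder_mult[of D 1 1] by simp
lemma isder_of_nat: "isder D \<Longrightarrow> D (of_nat n) = 0"
  by (induction n) (simp_all add: isder_add isder_1 isder_0)
lemma isder_numeral: "isder D \<Longrightarrow> D (numeral w) = 0"
  using isder_of_nat[of D "numeral w"] by simp

lemma isder_inv: "isder D \<Longrightarrow> P * R = 1 \<Longrightarrow> D R = - (R * R * D P)"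
proof -
  assume d: "isder D" and pr: "P * R = 1"
  have "0 = D (P * R)" using pr isder_1[OF d] by simp
  also have "\<dots> = P * D R + D P * R" by (rule isder_mult[OF d])
  finally have "R * (P * D R + D P * R) = 0" by simp
  then have e: "R * (P * D R) = - (R * (D P * R))" by (simp add: algebra_simps eq_neg_iff_add_eq_0)
  have "D R = (P * R) * D R" using pr by simp
  also have "\<dots> = R * (P * D R)" by (simp add: algebra_simps)
  also have "\<dots> = - (R * R * D P)" using e by (simp add: algebra_simps)
  finally show ?thesis .
qed


definition cmapD :: "(jpoly \<Rightarrow> jpoly) \<Rightarrow> jpoly fls \<Rightarrow> jpoly fls" where
  "cmapD D f = Abs_fls (\<lambda>n. D (f $$ n))"

lemma cmapD_nth: "isder D \<Longrightarrow> cmapD D f $$ n = D (f $$ n)"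
proof -
  assume d: "isder D"
  obtain N where "\<forall>n<N. f$$n = 0" by (elim fls_nth_vanishes_belowE)
  then have "\<forall>n<N. D (f $$ n) = 0" using isder_0[OF d] by simp
  then show ?thesis unfolding cmapD_def by (rule nth_Abs_fls_lower_bound)
qed

lemma isder_sum: "isder D \<Longrightarrow> D (sum f S) = (\<Sum>s\<in>S. D (f s))"
  by (induction S rule: infinite_finite_induct) (simp_all add: isder_0 isder_add)

lemma times_nth_bound:
  fixes f g :: "'a::comm_ring_1 fls"
  assumes F: "\<forall>i<N. f $$ i = 0" and G: "\<forall>i<M. g $$ i = 0"
  shows "(f * g) $$ n = (\<Sum>i=N..n - M. f $$ i * g $$ (n - i))"
proof (cases "f = 0 \<or> g = 0")
  case True then show ?thesis by auto
next
  case False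
  then have nf: "f \<noteq> 0" and ng: "g \<noteq> 0" by auto
  have dN: "N \<le> fls_subdegree f" using fls_subdegree_geI[OF nf] F by auto
  have dM: "M \<le> fls_subdegree g" using fls_subdegree_geI[OF ng] G by auto
  have "(f * g) $$ n = (\<Sum>i=fls_subdegree f..n - fls_subdegree g. f $$ i * g $$ (n - i))"
    by (rule fls_times_nth(2))
  also have "\<dots> = (\<Sum>i=N..n - M. f $$ i * g $$ (n - i))"
  proof (rule sum.mono_neutral_left)
    show "\<forall>i\<in>{N..n - M} - {fls_subdegree f..n - fls_subdegree g}. f $$ i * g $$ (n - i) = 0"
    proof
      fix i assume i: "i \<in> {N..n - M} - {fls_subdegree f..n - fls_subdegree g}"
      then have "i < fls_subdegree f \<or> n - i < fls_subdegree g" by auto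
      then show "f $$ i * g $$ (n - i) = 0" by auto
    qed
  qed (use dN dM in auto)
  finally show ?thesis .
qed

lemma isder_cmapD: "isder D \<Longrightarrow> isder (cmapD D)"
proof -
  assume d: "isder D"
  show ?thesis unfolding isder_def
  proof (intro conjI allI)
    fix f g :: "jpoly fls"
    show "cmapD D (f + g) = cmapD D f + cmapD D g"
      by (rule fls_eqI) (simp add: cmapD_nth[OF d] isder_add[OF d])
    show "cmapD D (f * g) = f * cmapD D g + cmapD D f * g"
    proof (rule fls_eqI)
      fix n
      obtain N where N: "\<forall>n<N. f$$n = 0" by (elim fls_nth_vanishes_belowE)
      obtain M where M: "\<forall>n<M. g$$n = 0" by (elim fls_nth_vanishes_belowE)
      have N': "\<forall>n<N. cmapD D f$$n = 0" using N by (simp add: cmapD_nth[OF d] isder_0[OF d])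
      have M': "\<forall>n<M. cmapD D g$$n = 0" using M by (simp add: cmapD_nth[OF d] isder_0[OF d])
      show "cmapD D (f * g) $$ n = (f * cmapD D g + cmapD D f * g) $$ n"
        by (simp add: cmapD_nth[OF d] times_nth_bound[OF N M] times_nth_bound[OF N M'] times_nth_bound[OF N' M]
            isder_sum[OF d] isder_mult[OF d] sum.distrib)
    qed
  qed
qed

lemma isder_fls_deriv: "isder (fls_deriv :: jpoly fls \<Rightarrow> jpoly fls)"
  unfolding isder_def by simp

lemma isder_of_int: "isder D \<Longrightarrow> D (of_int k) = 0"
proof -
  assume d: "isder D"
  show ?thesis
    by (cases k rule: int_cases) (simp_all add: isder_of_nat[OF d] isder_uminus[OF d] isder_diff[OF d] isder_1[OF d])
qed

lemma cmapD_deriv: "isder D \<Longrightarrow> cmapD D (fls_deriv f) = fls_deriv (cmapD D f)"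
proof -
  assume d: "isder D"
  have "D (of_int (n + 1) * f $$ (n + 1)) = of_int (n + 1) * D (f $$ (n + 1))" for n
    by (simp only: isder_mult[OF d] isder_of_int[OF d]) simp
  then show ?thesis by (intro fls_eqI) (simp only: cmapD_nth[OF d] fls_deriv_nth)
qed

lemma cmapD_const: "isder D \<Longrightarrow> cmapD D (fls_const c) = fls_const (D c)"
  by (rule fls_eqI) (simp add: cmapD_nth isder_0)

lemma cmapD_phiL: "isder D \<Longrightarrow> cmapD D phiL = phiD D"
  by (rule fls_eqI) (simp add: cmapD_nth isder_0 isder_1 isder_add phiL_def phiD_def)

lemma key:
  fixes dx dy dl :: "'a::comm_ring_1 \<Rightarrow> 'a"
  assumes ddx: "isder dx" and ddy: "isder dy" and ddl: "isder dl"
    and cx: "\<And>f. dx (dl f) = dl (dx f)" and cy: "\<And>f. dy (dl f) = dl (dy f)"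
    and PX: "P * X = -1" and PY: "P * Y = - (phi - u)"
    and Pdef: "P = phi^2 - u * phi - v"
    and xphi: "dx phi = X" and yphi: "dy phi = Y" and lphi: "dl phi = psi"
    and lu: "dl u = 0" and lv: "dl v = 0"
    and xu: "dx u = a" and yu: "dy u = b" and xv: "dx v = b" and yv: "dy v = v * a - u * b - 1"
    and xa: "dx a = c" and ya: "dy a = d" and xb: "dx b = d" and yb: "dy b = v * c - u * d"
  shows "dy (dy (P * psi^2)) + u * dx (dy (P * psi^2)) - v * dx (dx (P * psi^2))
          + b * dx (P * psi^2) - a * dy (P * psi^2) = 0"
proof -
  define R where "R = - X"
  have PR: "P * R = 1" using PX by (simp add: R_def)
  have Y: "Y = - ((phi - u) * R)"
  proof -
    have "Y = (P * R) * Y" using PR by simp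
    also have "\<dots> = R * (P * Y)" by (simp add: algebra_simps)
    finally show ?thesis using PY by (simp add: algebra_simps)
  qed
  have P2: "P = phi * phi - u * phi - v" using Pdef by (simp add: power2_eq_square)
  have lP: "dl P = 2 * phi * psi - u * psi"
    unfolding P2 
    by (simp only: isder_diff[OF ddl] isder_mult[OF ddl] lphi lu lv) (simp add: algebra_simps)
  have lR: "dl R = - (R * R * (2 * phi * psi - u * psi))"
    using isder_inv[OF ddl PR] lP by simp
  have xR0: "dx R = - (R * R * dx P)" by (rule isder_inv[OF ddx PR])
  have yR0: "dy R = - (R * R * dy P)" by (rule isder_inv[OF ddy PR])
  have xphi': "dx phi = - R" using xphi by (simp add: R_def)
  have yphi': "dy phi = - ((phi - u) * R)" using yphi Y by simp
  have xP: "dx P = 2 * phi * (- R) - a * phi - u * (- R) - b"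
    unfolding P2
    by (simp only: isder_diff[OF ddx] isder_mult[OF ddx] xphi' xu xv) (simp add: algebra_simps)
  have yP: "dy P = 2 * phi * (- ((phi - u) * R)) - b * phi - u * (- ((phi - u) * R)) - (v * a - u * b - 1)"
    unfolding P2
    by (simp only: isder_diff[OF ddy] isder_mult[OF ddy] yphi' yu yv) (simp add: algebra_simps)
  have xR: "dx R = - (R * R * (2 * phi * (- R) - a * phi - u * (- R) - b))" using xR0 xP by simp
  have yR: "dy R = - (R * R * (2 * phi * (- ((phi - u) * R)) - b * phi - u * (- ((phi - u) * R)) - (v * a - u * b - 1)))"
    using yR0 yP by simp
  have xpsi: "dx psi = R * R * (2 * phi * psi - u * psi)"
    using cx[of phi] lphi xphi' lR ddl by (simp add: isder_uminus)
  have ypsi: "dy psi = - (psi * R + (phi - u) * (- (R * R * (2 * phi * psi - u * psi))))"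
    using cy[of phi] lphi yphi' lR lu by (simp add: isder_uminus[OF ddl] isder_diff[OF ddl] isder_mult[OF ddl])
  have E: "dy (dy (P * psi^2)) + u * dx (dy (P * psi^2)) - v * dx (dx (P * psi^2))
          + b * dx (P * psi^2) - a * dy (P * psi^2) = (32*phi^4*psi^2*R^3 - 64*phi^3*psi^2*R^3*u + 8*phi^3*psi^2*R^2*u*a + 8*phi^3*psi^2*R^2*b + 40*phi^2*psi^2*R^3*u^2 - 32*phi^2*psi^2*R^3*v - 12*phi^2*psi^2*R^2*u^2*a - 12*phi^2*psi^2*R^2*u*b - 24*phi^2*psi^2*R^2 - 4*phi^2*psi^2*R*a - 8*phi*psi^2*R^3*u^3 + 32*phi*psi^2*R^3*u*v + 4*phi*psi^2*R^2*u^3*a + 4*phi*psi^2*R^2*u^2*b - 8*phi*psi^2*R^2*u*v*a + 24*phi*psi^2*R^2*u - 8*phi*psi^2*R^2*v*b - 6*phi*psi^2*R*b - 8*psi^2*R^3*u^2*v + 4*psi^2*R^2*u^2*v*a - 5*psi^2*R^2*u^2 + 4*psi^2*R^2*u*v*b + 4*psi^2*R^2*v + psi^2*R*u^2*a + 3*psi^2*R*u*b + 4*psi^2*R) * ((phi * phi - u * phi - v) * R - 1)"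
    unfolding P2 power2_eq_square
    apply (simp only: isder_add[OF ddx] isder_diff[OF ddx] isder_mult[OF ddx] isder_uminus[OF ddx] isder_1[OF ddx] isder_numeral[OF ddx] isder_numeral[OF ddy]
       isder_add[OF ddy] isder_diff[OF ddy] isder_mult[OF ddy] isder_uminus[OF ddy] isder_1[OF ddy]
       xphi' yphi' xpsi ypsi xR yR xu yu xv yv xa ya xb yb)
    apply (simp add: algebra_simps power2_eq_square power3_eq_cube power4_eq_xxxx)
    done
  show ?thesis unfolding E using PR P2 by simp
qed

lemma fls_const_add': "fls_const (x + y) = fls_const x + (fls_const y :: jpoly fls)"
  by (rule fls_eqI) simp
lemma fls_const_diff': "fls_const (x - y) = fls_const x - (fls_const y :: jpoly fls)"
  by (rule fls_eqI) simp
lemma fls_const_one': "fls_const 1 = (1 :: jpoly fls)"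
  by (rule fls_eqI) simp

lemma isder_tDx: "isder (tDx phx)" unfolding tDx_def by (rule isder_derivation)
lemma isder_tDy: "isder (tDy phy)" unfolding tDy_def by (rule isder_derivation)
lemma isder_genDx: "isder (derivation genDx)" by (rule isder_derivation)

lemma tDx_cvar: "tDx phx (cvar v) = (case v of Xv \<Rightarrow> 1 | Yv \<Rightarrow> 0
       | Zv a b \<Rightarrow> cvar (Zv (Suc a) b)
       | Phi k \<Rightarrow> (if 4 \<le> k then phx k else 0))"
  unfolding tDx_def by (rule derivation_cvar)
lemma tDy_cvar: "tDy phy (cvar v) = (case v of Xv \<Rightarrow> 0 | Yv \<Rightarrow> 1
       | Zv a b \<Rightarrow> (if b then (derivation genDx ^^ a) zyy else cvar (Zv a True))
       | Phi k \<Rightarrow> (if 4 \<le> k then phy k else 0))"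
  unfolding tDy_def by (rule derivation_cvar)

lemma genDx_zyy: "derivation genDx zyy = zy * cvar (Zv 3 False) - zx * cvar (Zv 2 True)"
  unfolding zyy_def
  by (simp only: isder_diff[OF isder_genDx] isder_mult[OF isder_genDx] isder_1[OF isder_genDx] derivation_cvar)
     (simp add: genDx_def zy_def zx_def algebra_simps numeral_eq_Suc)

definition lowb :: "int \<Rightarrow> jpoly fls \<Rightarrow> bool" where
  "lowb N f \<longleftrightarrow> (\<forall>n<N. f $$ n = 0)"

lemma lowb_mult: "lowb N f \<Longrightarrow> lowb M g \<Longrightarrow> lowb (N + M) (f * g)"
  unfolding lowb_def
proof (intro allI impI)
  fix n assume F: "\<forall>n<N. f $$ n = 0" and G: "\<forall>n<M. g $$ n = 0" and n: "n < N + M"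
  show "(f * g) $$ n = 0" using times_nth_bound[OF F G, of n] n by simp
qed

lemma lowb_add: "lowb N f \<Longrightarrow> lowb N g \<Longrightarrow> lowb N (f + g)" by (simp add: lowb_def)
lemma lowb_diff: "lowb N f \<Longrightarrow> lowb N g \<Longrightarrow> lowb N (f - g)" by (simp add: lowb_def)
lemma lowb_mono: "lowb N f \<Longrightarrow> M \<le> N \<Longrightarrow> lowb M f" by (simp add: lowb_def)
lemma lowb_const: "lowb 0 (fls_const c)" by (simp add: lowb_def)

theorem mainTheorem11:
  fixes phx phy :: "nat \<Rightarrow> jpoly"
  assumes "covering_data phx phy"
  shows "(\<forall>m::int. m < -6 \<longrightarrow> fls_nth Zser m = 0) \<and>
         (\<forall>n::int. n \<ge> -4 \<longrightarrow>
            (let W = fls_nth Zser (n - 2) in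
               tDy phy (tDy phy W) + zx * tDx phx (tDy phy W) - zy * tDx phx (tDx phx W)
               + zxy * tDx phx W - zxx * tDy phy W = 0))"
proof
  have lphi: "lowb (-1) phiL" by (simp add: lowb_def phiL_def)
  have lpsi: "lowb (-2) (fls_deriv phiL)"
  proof -
    have "\<forall>n < -2. fls_deriv phiL $$ n = 0"
    proof (intro allI impI)
      fix n :: int assume "n < -2"
      then have "phiL $$ (n + 1) = 0" using lphi by (simp add: lowb_def)
      then show "fls_deriv phiL $$ n = 0" by simp
    qed
    then show ?thesis by (simp add: lowb_def)
  qed
  have lP: "lowb (-2) Pfac"
    unfolding Pfac_def power2_eq_square
    by (intro lowb_diff lowb_mult[of "-1" _ "-1", simplified] lphi
          lowb_mono[OF lowb_mult[OF lowb_const lphi]] lowb_mono[OF lowb_const]) simp_all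
  have "lowb (-6) Zser"
    unfolding Zser_def power2_eq_square
    using lowb_mult[OF lP lowb_mult[OF lpsi lpsi]] by simp
  then show "\<forall>m::int. m < -6 \<longrightarrow> fls_nth Zser m = 0" by (simp add: lowb_def)
next
  let ?Dx = "tDx phx" and ?Dy = "tDy phy"
  let ?dx = "cmapD ?Dx" and ?dy = "cmapD ?Dy"
  have dx: "isder ?dx" by (rule isder_cmapD[OF isder_tDx])
  have dy: "isder ?dy" by (rule isder_cmapD[OF isder_tDy])
  have cov: "Pfac * phiD ?Dx = - 1" "Pfac * phiD ?Dy = - (phiL - fls_const zx)"
    using assms by (simp_all add: covering_data_def)
  have S: "?dy (?dy (Pfac * (fls_deriv phiL)^2)) + fls_const zx * ?dx (?dy (Pfac * (fls_deriv phiL)^2))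
       - fls_const zy * ?dx (?dx (Pfac * (fls_deriv phiL)^2))
       + fls_const zxy * ?dx (Pfac * (fls_deriv phiL)^2) - fls_const zxx * ?dy (Pfac * (fls_deriv phiL)^2) = 0"
  proof (rule key[where dx="cmapD (tDx phx)" and dy="cmapD (tDy phy)" and dl=fls_deriv and P=Pfac
         and X="phiD (tDx phx)" and Y="phiD (tDy phy)" and phi=phiL and u="fls_const zx" and v="fls_const zy"
         and psi="fls_deriv phiL" and a="fls_const zxx" and b="fls_const zxy"
         and c="fls_const (cvar (Zv 3 False))" and d="fls_const (cvar (Zv 2 True))"])
    show "isder ?dx" by (rule dx)
    show "isder ?dy" by (rule dy)
    show "isder (fls_deriv :: jpoly fls \<Rightarrow> jpoly fls)" by (rule isder_fls_deriv)
    show "\<And>f. ?dx (fls_deriv f) = fls_deriv (?dx f)" by (rule cmapD_deriv[OF isder_tDx])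
    show "\<And>f. ?dy (fls_deriv f) = fls_deriv (?dy f)" by (rule cmapD_deriv[OF isder_tDy])
    show "Pfac * phiD ?Dx = - 1" by (rule cov(1))
    show "Pfac * phiD ?Dy = - (phiL - fls_const zx)" by (rule cov(2))
    show "Pfac = phiL^2 - fls_const zx * phiL - fls_const zy" by (rule Pfac_def)
    show "fls_deriv phiL = fls_deriv phiL" by (rule refl)
    show "?dx phiL = phiD ?Dx" by (rule cmapD_phiL[OF isder_tDx])
    show "?dy phiL = phiD ?Dy" by (rule cmapD_phiL[OF isder_tDy])
    show "fls_deriv (fls_const zx) = 0" "fls_deriv (fls_const zy) = 0" by simp_all
    show "?dx (fls_const zx) = fls_const zxx"
      by (simp add: cmapD_const[OF isder_tDx] tDx_cvar zx_def zxx_def numeral_eq_Suc)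
    show "?dy (fls_const zx) = fls_const zxy"
      by (simp add: cmapD_const[OF isder_tDy] tDy_cvar zx_def zxy_def)
    show "?dx (fls_const zy) = fls_const zxy"
      by (simp add: cmapD_const[OF isder_tDx] tDx_cvar zy_def zxy_def)
    show "?dy (fls_const zy) = fls_const zy * fls_const zxx - fls_const zx * fls_const zxy - 1"
      by (simp add: cmapD_const[OF isder_tDy] tDy_cvar zy_def zxy_def zx_def zxx_def zyy_def
           fls_const_diff' fls_const_one' flip: fls_const_mult_const)
    show "?dx (fls_const zxx) = fls_const (cvar (Zv 3 False))"
      by (simp add: cmapD_const[OF isder_tDx] tDx_cvar zxx_def numeral_eq_Suc)
    show "?dy (fls_const zxx) = fls_const (cvar (Zv 2 True))"
      by (simp add: cmapD_const[OF isder_tDy] tDy_cvar zxx_def)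
    show "?dx (fls_const zxy) = fls_const (cvar (Zv 2 True))"
      by (simp add: cmapD_const[OF isder_tDx] tDx_cvar zxy_def numeral_eq_Suc)
    show "?dy (fls_const zxy) = fls_const zy * fls_const (cvar (Zv 3 False)) - fls_const zx * fls_const (cvar (Zv 2 True))"
      by (simp add: cmapD_const[OF isder_tDy] tDy_cvar zxy_def genDx_zyy fls_const_diff' flip: fls_const_mult_const)
  qed
  show "\<forall>n::int. n \<ge> -4 \<longrightarrow>
            (let W = fls_nth Zser (n - 2) in
               tDy phy (tDy phy W) + zx * tDx phx (tDy phy W) - zy * tDx phx (tDx phx W)
               + zxy * tDx phx W - zxx * tDy phy W = 0)"
  proof (intro allI impI)
    fix n :: int
    have "fls_nth (?dy (?dy (Pfac * (fls_deriv phiL)^2)) + fls_const zx * ?dx (?dy (Pfac * (fls_deriv phiL)^2))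
       - fls_const zy * ?dx (?dx (Pfac * (fls_deriv phiL)^2))
       + fls_const zxy * ?dx (Pfac * (fls_deriv phiL)^2) - fls_const zxx * ?dy (Pfac * (fls_deriv phiL)^2)) (n - 2) = 0"
      by (simp only: S fls_zero_nth)
    then show "let W = fls_nth Zser (n - 2) in
               tDy phy (tDy phy W) + zx * tDx phx (tDy phy W) - zy * tDx phx (tDx phx W)
               + zxy * tDx phx W - zxx * tDy phy W = 0"
      unfolding Zser_def Let_def
      by (simp only: fls_plus_nth fls_minus_nth fls_mult_const_nth cmapD_nth[OF isder_tDx] cmapD_nth[OF isder_tDy])
  qed
qed

end
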